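(* Let $\mathbb{F}$ be a field, $0\neq h\in\mathbb{F}[x]$, and let $A=A_h$ be the unital subalgebra of the Weyl algebra $A_1$ generated by $x$ and $\hat y=yh$. Let $\mathsf{D}_2:A\oplus A\to A$, $\mathsf{D}_2(\alpha,\beta)=[\beta,x]+[\hat y,\alpha]-F_\alpha(h)$. Then: (a) $\operatorname{im}\mathsf{D}_2\subseteq\gcd(h,h')A$; (b) if $\operatorname{char}(\mathbb{F})=0$, then $\operatorname{im}\mathsf{D}_2=\gcd(h,h')A$.
   Context: $A_1$ is generated by $x,y$ with $yx-xy=1$, so $\hat yx-x\hat y=h$ in $A$. $[a,b]=ab-ba$. For $\alpha\in A$, $F_\alpha:\mathbb{F}[x]\to A$ is the linear map with $F_\alpha(x^s)=\sum_{\ell=0}^{s-1}x^\ell\alpha x^{s-\ell-1}$ ($F_\alpha(1)=0$). $h'$ is the derivative of $h$; $\gcd$ monic. *)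

theory Defs
  imports "HOL-Computational_Algebra.Computational_Algebra"
begin

text \<open>Concrete model of the Weyl algebra A_1 over a field: an element is written in
normal form  sum_j p_j(x) y^j  (coefficients in F[x] on the left, powers of y on the right),
represented as a polynomial in y with coefficients in F[x], i.e. type  'a poly poly.
Multiplication uses  y^j q(x) = sum_t (j choose t) q^(t)(x) y^(j-t),
which encodes the defining relation  yx - xy = 1.\<close>

definition wmult :: "'a::field poly poly \<Rightarrow> 'a poly poly \<Rightarrow> 'a poly poly" where
  "wmult P Q = (\<Sum>j\<le>degree P. \<Sum>l\<le>degree Q. \<Sum>t\<le>j.
      monom (of_nat (j choose t) * coeff P j * ((pderiv ^^ t) (coeff Q l))) (j - t + l))"

definition wcomm :: "'a::field poly poly \<Rightarrow> 'a poly poly \<Rightarrow> 'a poly poly" where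
  "wcomm a b = wmult a b - wmult b a"

definition Xw :: "'a::field poly poly" where "Xw = monom [:0, 1:] 0"
definition Yw :: "'a::field poly poly" where "Yw = monom 1 1"
definition xpow :: "nat \<Rightarrow> 'a::field poly poly" where "xpow n = monom (monom 1 n) 0"
definition polyw :: "'a::field poly \<Rightarrow> 'a poly poly" where "polyw p = monom p 0"

definition yhat :: "'a::field poly \<Rightarrow> 'a poly poly" where
  "yhat h = wmult Yw (polyw h)"

inductive_set Ah :: "'a::field poly \<Rightarrow> 'a poly poly set" for h where
  scalar: "polyw [:c:] \<in> Ah h"
| genx: "Xw \<in> Ah h"
| geny: "yhat h \<in> Ah h"
| add: "a \<in> Ah h \<Longrightarrow> b \<in> Ah h \<Longrightarrow> a + b \<in> Ah h"
| mult: "a \<in> Ah h \<Longrightarrow> b \<in> Ah h \<Longrightarrow> wmult a b \<in> Ah h"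

definition Fmap :: "'a::field poly poly \<Rightarrow> 'a poly \<Rightarrow> 'a poly poly" where
  "Fmap \<alpha> p = (\<Sum>s\<le>degree p. smult [:coeff p s:]
       (\<Sum>l<s. wmult (wmult (xpow l) \<alpha>) (xpow (s - l - 1))))"

definition D2 :: "'a::field poly \<Rightarrow> 'a poly poly \<Rightarrow> 'a poly poly \<Rightarrow> 'a poly poly" where
  "D2 h \<alpha> \<beta> = wcomm \<beta> Xw + wcomm (yhat h) \<alpha> - Fmap \<alpha> h"

end

theory Submission
  imports Defs
begin


lemma smult_sum_right: "smult c (sum f S) = (\<Sum>x\<in>S. smult c (f x))"
  by (induction S rule: infinite_finite_induct) (simp_all add: smult_add_right)

definition Dop :: "'a::field poly poly \<Rightarrow> 'a poly poly" where
  "Dop f = map_poly pderiv f + pCons 0 f"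

lemma coeff_Dop: "coeff (Dop f) n = pderiv (coeff f n) + (if n = 0 then 0 else coeff f (n - 1))"
  by (simp add: Dop_def coeff_map_poly coeff_pCons')

lemma Dop_add: "Dop (f + g) = Dop f + Dop g"
  by (simp add: poly_eq_iff coeff_Dop pderiv_add)

lemma Dop_0[simp]: "Dop 0 = 0"
  by (simp add: poly_eq_iff coeff_Dop)

lemma Dop_diff: "Dop (f - g) = Dop f - Dop g"
  by (simp add: poly_eq_iff coeff_Dop pderiv_diff)

lemma Dop_smult: "Dop (smult q f) = smult (pderiv q) f + smult q (Dop f)"
  by (simp add: poly_eq_iff coeff_Dop pderiv_mult algebra_simps)

lemma Dop_monom: "Dop (monom c k) = monom (pderiv c) k + monom c (Suc k)"
  by (auto simp add: poly_eq_iff coeff_Dop coeff_monom)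

lemma Dpow_add: "(Dop^^j) (f + g) = (Dop^^j) f + (Dop^^j) g"
  by (induction j) (simp_all add: Dop_add)

lemma Dpow_0[simp]: "(Dop^^j) 0 = 0"
  by (induction j) simp_all

lemma Dpow_diff: "(Dop^^j) (f - g) = (Dop^^j) f - (Dop^^j) g"
  by (induction j) (simp_all add: Dop_diff)

lemma Dpow_sum: "(Dop^^j) (sum f S) = (\<Sum>x\<in>S. (Dop^^j) (f x))"
  by (induction S rule: infinite_finite_induct) (simp_all add: Dpow_add)

lemma Dop_sum: "Dop (sum f S) = (\<Sum>x\<in>S. Dop (f x))"
  using Dpow_sum[of 1] by simp

lemma Dpow_monom:
  "(Dop^^j) (monom q l) = (\<Sum>t\<le>j. monom (of_nat (j choose t) * (pderiv^^t) q) (j - t + l))"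
proof (induction j)
  case 0
  then show ?case by simp
next
  case (Suc j)
  have "(Dop^^Suc j) (monom q l) = Dop (\<Sum>t\<le>j. monom (of_nat (j choose t) * (pderiv^^t) q) (j - t + l))"
    using Suc by simp
  also have "\<dots> = (\<Sum>t\<le>j. monom (of_nat (j choose t) * (pderiv^^Suc t) q) (j - t + l))
       + (\<Sum>t\<le>j. monom (of_nat (j choose t) * (pderiv^^t) q) (Suc (j - t + l)))"
    by (simp add: Dop_sum Dop_monom sum.distrib pderiv_mult)
  also have "(\<Sum>t\<le>j. monom (of_nat (j choose t) * (pderiv^^t) q) (Suc (j - t + l)))
     = monom q (Suc (j + l)) + (\<Sum>t<j. monom (of_nat (j choose Suc t) * (pderiv^^Suc t) q) (j - t + l))"
    by (subst sum.atMost_shift) (simp add: Suc_diff_Suc)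
  also have "(\<Sum>t<j. monom (of_nat (j choose Suc t) * (pderiv^^Suc t) q) (j - t + l))
      = (\<Sum>t\<le>j. monom (of_nat (j choose Suc t) * (pderiv^^Suc t) q) (j - t + l))"
    by (simp add: lessThan_Suc_atMost[symmetric] binomial_eq_0)
  finally have "(Dop^^Suc j) (monom q l) = monom q (Suc (j + l)) +
     (\<Sum>t\<le>j. monom (of_nat (Suc j choose Suc t) * (pderiv^^Suc t) q) (j - t + l))"
    by (simp add: sum.distrib[symmetric] add_monom algebra_simps del: funpow.simps)
  also have "\<dots> = (\<Sum>t\<le>Suc j. monom (of_nat (Suc j choose t) * (pderiv^^t) q) (Suc j - t + l))"
    by (subst (2) sum.atMost_shift) (simp del: funpow.simps add: lessThan_Suc_atMost)
  finally show ?case .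
qed



definition opw :: "'a::field poly poly \<Rightarrow> 'a poly poly \<Rightarrow> 'a poly poly" where
  "opw P f = (\<Sum>j\<le>degree P. smult (coeff P j) ((Dop^^j) f))"

lemma opw_bound: "degree P \<le> N \<Longrightarrow> opw P f = (\<Sum>j\<le>N. smult (coeff P j) ((Dop^^j) f))"
  unfolding opw_def
  by (rule sum.mono_neutral_left) (auto simp: coeff_eq_0)

lemma wmult_eq: "wmult P Q = opw P Q"
proof -
  have "opw P Q = (\<Sum>j\<le>degree P. smult (coeff P j) ((Dop^^j) (\<Sum>l\<le>degree Q. monom (coeff Q l) l)))"
    by (simp add: opw_def poly_as_sum_of_monoms)
  also have "\<dots> = wmult P Q"
    unfolding wmult_def
    by (simp add: Dpow_sum Dpow_monom smult_sum_right smult_monom mult_ac)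
  finally show ?thesis by simp
qed

lemma opw_add_left: "opw (P + P') f = opw P f + opw P' f"
proof -
  let ?N = "max (degree P) (degree P')"
  have "opw (P + P') f = (\<Sum>j\<le>?N. smult (coeff (P + P') j) ((Dop^^j) f))"
    by (rule opw_bound) (simp add: degree_add_le)
  also have "\<dots> = (\<Sum>j\<le>?N. smult (coeff P j) ((Dop^^j) f)) + (\<Sum>j\<le>?N. smult (coeff P' j) ((Dop^^j) f))"
    by (simp add: smult_add_left sum.distrib)
  also have "\<dots> = opw P f + opw P' f"
    using opw_bound[of P ?N f] opw_bound[of P' ?N f] by simp
  finally show ?thesis .
qed

lemma opw_0_left[simp]: "opw 0 f = 0"
  by (simp add: opw_def)

lemma opw_0_right[simp]: "opw P 0 = 0"
  by (simp add: opw_def)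

lemma opw_diff_left: "opw (P - P') f = opw P f - opw P' f"
  using opw_add_left[of "P - P'" P' f] by (simp add: algebra_simps)

lemma opw_add_right: "opw P (f + g) = opw P f + opw P g"
  by (simp add: opw_def Dpow_add smult_add_right sum.distrib)

lemma opw_diff_right: "opw P (f - g) = opw P f - opw P g"
  by (simp add: opw_def Dpow_diff smult_diff_right sum_subtractf)

lemma opw_sum_left: "opw (sum P S) f = (\<Sum>x\<in>S. opw (P x) f)"
  by (induction S rule: infinite_finite_induct) (simp_all add: opw_add_left)

lemma opw_sum_right: "opw P (sum f S) = (\<Sum>x\<in>S. opw P (f x))"
  by (induction S rule: infinite_finite_induct) (simp_all add: opw_add_right)

lemma opw_smult_left: "opw (smult q P) f = smult q (opw P f)"
proof -
  have "opw (smult q P) f = (\<Sum>j\<le>degree P. smult (coeff (smult q P) j) ((Dop^^j) f))"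
    by (rule opw_bound) (simp add: degree_smult_le)
  then show ?thesis by (simp add: opw_def smult_sum_right)
qed

lemma opw_monom_left: "opw (monom c k) f = smult c ((Dop^^k) f)"
proof -
  have "opw (monom c k) f = (\<Sum>j\<le>k. smult (coeff (monom c k) j) ((Dop^^j) f))"
    by (rule opw_bound) (simp add: degree_monom_le)
  also have "\<dots> = smult c ((Dop^^k) f)"
  proof -
    have "(\<Sum>j\<le>k. smult (coeff (monom c k) j) ((Dop^^j) f)) = (\<Sum>j\<le>k. if j = k then smult c ((Dop^^j) f) else 0)"
      by (rule sum.cong) (auto simp: coeff_monom)
    then show ?thesis by simp
  qed
  finally show ?thesis .
qed

lemma opw_Dop: "Dop (opw Q f) = opw (Dop Q) f"
proof -
  have "opw (Dop Q) f = opw (Dop (\<Sum>l\<le>degree Q. monom (coeff Q l) l)) f"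
    by (simp add: poly_as_sum_of_monoms)
  also have "\<dots> = (\<Sum>l\<le>degree Q. smult (pderiv (coeff Q l)) ((Dop^^l) f)
         + smult (coeff Q l) ((Dop^^Suc l) f))"
    by (simp add: Dop_sum Dop_monom opw_sum_left opw_add_left opw_monom_left)
  also have "\<dots> = Dop (opw Q f)"
    by (simp add: opw_def Dop_sum Dop_smult)
  finally show ?thesis by simp
qed

lemma opw_Dpow: "(Dop^^j) (opw Q f) = opw ((Dop^^j) Q) f"
  by (induction j) (simp_all add: opw_Dop)

lemma opw_assoc: "opw (opw P Q) R = opw P (opw Q R)"
proof -
  have "opw (opw P Q) R = (\<Sum>j\<le>degree P. smult (coeff P j) (opw ((Dop^^j) Q) R))"
    by (simp add: opw_def[of P Q] opw_sum_left opw_smult_left)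
  also have "\<dots> = opw P (opw Q R)"
    by (simp add: opw_def[of P "opw Q R"] opw_Dpow)
  finally show ?thesis .
qed

lemma opw_const_left: "opw (monom p 0) f = smult p f"
  by (simp add: opw_monom_left)



lemma opw_polyw_left: "opw (polyw p) f = smult p f"
  by (simp add: polyw_def opw_monom_left)

lemma Xw_polyw: "Xw = polyw [:0,1:]"
  by (simp add: Xw_def polyw_def)

lemma xpow_polyw: "xpow n = polyw (monom 1 n)"
  by (simp add: xpow_def polyw_def)

lemma yhat_eq: "yhat h = monom (pderiv h) 0 + monom h 1"
  by (simp add: yhat_def wmult_eq Yw_def polyw_def opw_monom_left Dop_monom)

lemma polyw_add: "polyw (p + q) = polyw p + polyw q"
  by (simp add: polyw_def add_monom)

lemma polyw_mult: "opw (polyw p) (polyw q) = polyw (p * q)"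
  unfolding opw_polyw_left by (simp add: polyw_def smult_monom)

lemma Dpow_monom1: "(Dop^^j) (monom 1 k) = monom 1 (j + k)"
  by (induction j) (simp_all add: Dop_monom)

lemma Dpow_one: "(Dop^^j) 1 = monom 1 j"
  using Dpow_monom1[of j 0] by (simp add: monom_0 one_pCons)

lemma opw_one_right: "opw a (polyw 1) = a"
  by (simp add: opw_def polyw_def Dpow_one smult_monom poly_as_sum_of_monoms)

lemma polyw_in: "polyw p \<in> Ah h"
proof (induction p rule: pCons_induct)
  case 0
  then show ?case using Ah.scalar[of 0 h] by simp
next
  case (pCons a p)
  have "polyw (pCons a p) = polyw [:a:] + wmult Xw (polyw p)"
  proof -
    have "pCons a p = [:a:] + [:0,1:] * p" by simp
    then show ?thesis by (simp add: wmult_eq Xw_polyw polyw_mult polyw_add[symmetric])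
  qed
  then show ?case using pCons Ah.add Ah.mult Ah.scalar Ah.genx by metis
qed

lemma smult_in: "a \<in> Ah h \<Longrightarrow> smult q a \<in> Ah h"
  using Ah.mult[OF polyw_in[of q h]] by (simp add: wmult_eq opw_polyw_left)

lemma zero_in: "0 \<in> Ah h"
  using polyw_in[of 0 h] by (simp add: polyw_def)

lemma diff_in: "a \<in> Ah h \<Longrightarrow> b \<in> Ah h \<Longrightarrow> a - b \<in> Ah h"
  using Ah.add[of a h "smult (-1) b"] smult_in[of b h "-1"] by simp

lemma mult_in: "a \<in> Ah h \<Longrightarrow> b \<in> Ah h \<Longrightarrow> opw a b \<in> Ah h"
  using Ah.mult by (metis wmult_eq)

lemma yhat_in: "yhat h \<in> Ah h" by (rule Ah.geny)

definition HI :: "'a::field poly \<Rightarrow> 'a poly poly set" where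
  "HI h = {smult h d | d. d \<in> Ah h}"

lemma HI_add: "a \<in> HI h \<Longrightarrow> b \<in> HI h \<Longrightarrow> a + b \<in> HI h"
  unfolding HI_def by (auto simp: smult_add_right[symmetric] intro: Ah.add)

lemma HI_diff: "a \<in> HI h \<Longrightarrow> b \<in> HI h \<Longrightarrow> a - b \<in> HI h"
  unfolding HI_def by (auto simp: smult_diff_right[symmetric] intro: diff_in)

lemma HI_0: "0 \<in> HI h"
  unfolding HI_def using zero_in[of h] by force

lemma HI_sum: "(\<And>x. x \<in> S \<Longrightarrow> f x \<in> HI h) \<Longrightarrow> sum f S \<in> HI h"
  by (induction S rule: infinite_finite_induct) (auto simp: HI_0 HI_add)

lemma HI_smult: "a \<in> HI h \<Longrightarrow> smult q a \<in> HI h"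
proof -
  assume "a \<in> HI h"
  then obtain d where "d \<in> Ah h" "a = smult h d" unfolding HI_def by auto
  moreover have "smult q (smult h d) = smult h (smult q d)" by (simp add: ac_simps)
  ultimately have "smult q a = smult h (smult q d)" by simp
  then show ?thesis unfolding HI_def using smult_in[OF \<open>d \<in> Ah h\<close>] by blast
qed

lemma HI_right: "a \<in> HI h \<Longrightarrow> b \<in> Ah h \<Longrightarrow> opw a b \<in> HI h"
  unfolding HI_def by (auto simp: opw_smult_left intro: mult_in)

lemma comm_yhat_poly: "opw (yhat h) (polyw p) - opw (polyw p) (yhat h) = polyw (h * pderiv p)"
  by (simp add: yhat_eq opw_add_left opw_monom_left polyw_def Dop_monom smult_monom
      smult_add_right add_monom[symmetric] algebra_simps)

lemma HI_left: "a \<in> Ah h \<Longrightarrow> d \<in> Ah h \<Longrightarrow> opw a (smult h d) \<in> HI h"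
proof (induction a arbitrary: d rule: Ah.induct)
  case (scalar c)
  have "opw (polyw [:c:]) (smult h d) = smult h (smult [:c:] d)" by (simp add: opw_polyw_left ac_simps)
  then show ?case unfolding HI_def using scalar smult_in by blast
next
  case genx
  have "opw Xw (smult h d) = smult h (smult [:0,1:] d)" by (simp add: Xw_polyw opw_polyw_left ac_simps)
  then show ?case unfolding HI_def using genx smult_in by blast
next
  case geny
  have "opw (yhat h) (smult h d) = opw (opw (yhat h) (polyw h)) d"
    by (simp add: opw_assoc opw_polyw_left)
  also have "\<dots> = opw (opw (polyw h) (yhat h) + polyw (h * pderiv h)) d"
    using comm_yhat_poly[of h h] by (simp add: algebra_simps)
  also have "\<dots> = smult h (opw (yhat h) d + smult (pderiv h) d)"
    by (simp add: opw_add_left opw_polyw_left smult_add_right opw_smult_left)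
  finally show ?case unfolding HI_def
    using geny by (auto intro!: Ah.add smult_in mult_in Ah.geny)
next
  case (add a b)
  then show ?case by (simp add: opw_add_left HI_add)
next
  case (mult a b)
  from mult.IH(2)[OF mult.prems] obtain e where e: "e \<in> Ah h" "opw b (smult h d) = smult h e"
    unfolding HI_def by auto
  show ?case using mult.IH(1)[OF e(1)] by (simp add: wmult_eq opw_assoc e(2))
qed

lemma HI_left': "a \<in> Ah h \<Longrightarrow> b \<in> HI h \<Longrightarrow> opw a b \<in> HI h"
  unfolding HI_def using HI_left by (auto simp: HI_def)

definition wc :: "'a::field poly poly \<Rightarrow> 'a poly poly \<Rightarrow> 'a poly poly" where
  "wc a b = opw a b - opw b a"

lemma wcomm_eq: "wcomm a b = wc a b"
  by (simp add: wcomm_def wc_def wmult_eq)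

lemma wc_mult_left: "wc (opw a b) c = opw a (wc b c) + opw (wc a c) b"
  by (simp add: wc_def opw_diff_left opw_diff_right opw_assoc)

lemma wc_mult_right: "wc a (opw b c) = opw (wc a b) c + opw b (wc a c)"
  by (simp add: wc_def opw_diff_left opw_diff_right opw_assoc)

lemma wc_add_left: "wc (a + b) c = wc a c + wc b c"
  by (simp add: wc_def opw_add_left opw_add_right)

lemma wc_add_right: "wc c (a + b) = wc c a + wc c b"
  by (simp add: wc_def opw_add_left opw_add_right)

lemma wc_self[simp]: "wc a a = 0"
  by (simp add: wc_def)

lemma wc_antisym: "wc a b = - wc b a"
  by (simp add: wc_def)


lemma wc_polyw: "wc (polyw p) (polyw q) = 0"
  by (simp add: wc_def polyw_mult mult.commute)

lemma comm_x_HI: "a \<in> Ah h \<Longrightarrow> wc a Xw \<in> HI h"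
proof (induction a rule: Ah.induct)
  case (scalar c)
  then show ?case by (simp add: Xw_polyw wc_polyw HI_0)
next
  case genx
  then show ?case by (simp add: HI_0)
next
  case geny
  have "wc (yhat h) Xw = smult h (polyw 1)"
    using comm_yhat_poly[of h "[:0,1:]"] by (simp add: wc_def Xw_polyw polyw_def smult_monom pderiv_pCons monom_0)
  then show ?case unfolding HI_def using polyw_in by blast
next
  case (add a b)
  then show ?case by (simp add: wc_add_left HI_add)
next
  case (mult a b)
  then show ?case by (simp add: wmult_eq wc_mult_left HI_add HI_left' HI_right)
qed

lemma comm_yhat_HI: "a \<in> Ah h \<Longrightarrow> wc (yhat h) a \<in> HI h"
proof (induction a rule: Ah.induct)
  case (scalar c)
  have "wc (yhat h) (polyw [:c:]) = smult h (polyw 0)"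
    using comm_yhat_poly[of h "[:c:]"] by (simp add: wc_def polyw_def)
  then show ?case unfolding HI_def using polyw_in by blast
next
  case genx
  have "wc (yhat h) Xw = smult h (polyw 1)"
    using comm_yhat_poly[of h "[:0,1:]"] by (simp add: wc_def Xw_polyw polyw_def smult_monom pderiv_pCons monom_0)
  then show ?case unfolding HI_def using polyw_in by blast
next
  case geny
  then show ?case by (simp add: HI_0)
next
  case (add a b)
  then show ?case by (simp add: wc_add_right HI_add)
next
  case (mult a b)
  then show ?case by (simp add: wmult_eq wc_mult_right HI_add HI_left' HI_right)
qed

lemma xpow_Suc: "xpow (Suc n) = opw (xpow n) Xw"
  by (simp add: xpow_polyw Xw_polyw polyw_mult monom_Suc)

lemma xpow_in: "xpow n \<in> Ah h"
  by (simp add: xpow_polyw polyw_in)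

lemma comm_xpow_HI: "a \<in> Ah h \<Longrightarrow> wc a (xpow n) \<in> HI h"
proof (induction n)
  case 0
  then show ?case by (simp add: wc_def xpow_polyw opw_polyw_left HI_0 opw_one_right)
next
  case (Suc n)
  then show ?case
    by (simp add: xpow_Suc wc_mult_right HI_add HI_left' HI_right comm_x_HI xpow_in Ah.genx)
qed



lemma pderiv_sum': "pderiv (sum f S) = (\<Sum>x\<in>S. pderiv (f x))"
  by (induction S rule: infinite_finite_induct) (simp_all add: pderiv_add)

lemma sum_monom_const: "(\<Sum>l<s. monom c k) = monom (of_nat s * c) k"
  by (induction s) (simp_all add: add_monom algebra_simps)

lemma smult_sum_left': "smult (sum f S) a = (\<Sum>x\<in>S. smult (f x) a)"
  by (rule smult_sum)

lemma Fmap_HI: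
  assumes a: "a \<in> Ah h"
  shows "Fmap a h - smult (pderiv h) a \<in> HI h"
proof -
  have ph: "pderiv h = (\<Sum>s\<le>degree h. (\<Sum>l<s. monom (coeff h s) (s - 1)))"
  proof -
    have "pderiv h = pderiv (\<Sum>s\<le>degree h. monom (coeff h s) s)"
      by (simp only: poly_as_sum_of_monoms)
    also have "\<dots> = (\<Sum>s\<le>degree h. monom (of_nat s * coeff h s) (s - 1))"
      by (simp only: pderiv_sum' pderiv_monom)
    also have "\<dots> = (\<Sum>s\<le>degree h. (\<Sum>l<s. monom (coeff h s) (s - 1)))"
      by (simp only: sum_monom_const)
    finally show ?thesis .
  qed
  have "smult (pderiv h) a = (\<Sum>s\<le>degree h. (\<Sum>l<s. smult (monom (coeff h s) (s - 1)) a))"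
    unfolding ph by (simp only: smult_sum)
  then have "Fmap a h - smult (pderiv h) a = (\<Sum>s\<le>degree h. (\<Sum>l<s.
      smult [:coeff h s:] (opw (opw (xpow l) a) (xpow (s - l - 1))) - smult (monom (coeff h s) (s - 1)) a))"
    by (simp add: Fmap_def wmult_eq smult_sum_right sum_subtractf)
  also have "\<dots> = (\<Sum>s\<le>degree h. (\<Sum>l<s.
      smult [:coeff h s:] (smult (monom 1 l) (wc a (xpow (s - l - 1))))))"
  proof (intro sum.cong refl)
    fix s l :: nat assume "l \<in> {..<s}"
    then have sl: "s - 1 = l + (s - l - 1)" by auto
    have "monom (coeff h s) (s - 1) = [:coeff h s:] * (monom 1 l * monom 1 (s - l - 1))"
      by (subst sl) (simp add: mult_monom monom_0 smult_monom)
    then show "smult [:coeff h s:] (opw (opw (xpow l) a) (xpow (s - l - 1))) - smult (monom (coeff h s) (s - 1)) a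
      = smult [:coeff h s:] (smult (monom 1 l) (wc a (xpow (s - l - 1))))"
      by (simp add: xpow_polyw opw_polyw_left wc_def opw_smult_left smult_diff_right)
  qed
  also have "\<dots> \<in> HI h"
    by (intro HI_sum HI_smult comm_xpow_HI a)
  finally show ?thesis .
qed

definition GI :: "'a::field_gcd poly \<Rightarrow> 'a poly poly set" where
  "GI h = {smult (gcd h (pderiv h)) a | a. a \<in> Ah h}"

lemma GI_add: "a \<in> GI h \<Longrightarrow> b \<in> GI h \<Longrightarrow> a + b \<in> GI h"
  unfolding GI_def by (auto simp: smult_add_right[symmetric] intro: Ah.add)

lemma GI_diff: "a \<in> GI h \<Longrightarrow> b \<in> GI h \<Longrightarrow> a - b \<in> GI h"
  unfolding GI_def by (auto simp: smult_diff_right[symmetric] intro: diff_in)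

lemma GI_dvd: assumes "gcd h (pderiv h) dvd q" "a \<in> Ah h" shows "smult q a \<in> GI h"
proof -
  obtain r where "q = gcd h (pderiv h) * r" using assms(1) by (auto elim: dvdE)
  then have "smult q a = smult (gcd h (pderiv h)) (smult r a)" by simp
  then show ?thesis unfolding GI_def using smult_in[OF assms(2)] by blast
qed

lemma HI_GI: "a \<in> HI h \<Longrightarrow> a \<in> GI (h::'a::field_gcd poly)"
  unfolding HI_def by (auto intro: GI_dvd)

lemma D2_eq: "D2 h \<alpha> \<beta> = wc \<beta> Xw + wc (yhat h) \<alpha> - Fmap \<alpha> h"
  by (simp add: D2_def wcomm_eq)

lemma part_a:
  assumes "\<alpha> \<in> Ah h" "\<beta> \<in> Ah h"
  shows "D2 h \<alpha> \<beta> \<in> GI (h::'a::field_gcd poly)"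
proof -
  have "D2 h \<alpha> \<beta> = wc \<beta> Xw + wc (yhat h) \<alpha> - ((Fmap \<alpha> h - smult (pderiv h) \<alpha>) + smult (pderiv h) \<alpha>)"
    by (simp add: D2_eq)
  also have "\<dots> \<in> GI h"
    using assms by (intro GI_add GI_diff HI_GI comm_x_HI comm_yhat_HI Fmap_HI GI_dvd) auto
  finally show ?thesis .
qed



definition DV :: "'a::field poly \<Rightarrow> 'a poly poly set" where
  "DV h = {P. \<forall>k. h ^ k dvd coeff P k}"

lemma DV_add: "P \<in> DV h \<Longrightarrow> Q \<in> DV h \<Longrightarrow> P + Q \<in> DV h"
  by (auto simp: DV_def)

lemma DV_0: "0 \<in> DV h" by (simp add: DV_def)

lemma DV_sum: "(\<And>x. x \<in> S \<Longrightarrow> f x \<in> DV h) \<Longrightarrow> sum f S \<in> DV h"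
  by (induction S rule: infinite_finite_induct) (auto simp: DV_0 DV_add)

lemma DV_monom: "h ^ n dvd c \<Longrightarrow> monom c n \<in> DV h"
  by (auto simp: DV_def coeff_monom)

lemma pderiv_dvd_pow: "h ^ Suc n dvd r \<Longrightarrow> h ^ n dvd pderiv r"
proof -
  assume "h ^ Suc n dvd r"
  then obtain s where s: "r = h ^ Suc n * s" by (auto elim: dvdE)
  have "pderiv r = h ^ Suc n * pderiv s + s * (smult (of_nat (Suc n)) (h ^ n) * pderiv h)"
    unfolding s by (simp only: pderiv_mult pderiv_power_Suc)
  moreover have "h ^ n dvd h ^ Suc n * pderiv s"
    by (intro dvd_mult2 le_imp_power_dvd) simp
  moreover have "h ^ n dvd s * (smult (of_nat (Suc n)) (h ^ n) * pderiv h)"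
    by (simp only: mult_smult_left) (intro dvd_mult dvd_smult dvd_mult2 dvd_refl)
  ultimately show ?thesis by simp
qed

lemma higher_pderiv_dvd: "h ^ (m + t) dvd r \<Longrightarrow> h ^ m dvd (pderiv ^^ t) r"
proof (induction t arbitrary: r)
  case 0
  then show ?case by simp
next
  case (Suc t)
  have "h ^ (m + t) dvd pderiv r"
    using Suc.prems by (intro pderiv_dvd_pow) simp
  then have "h ^ m dvd (pderiv ^^ t) (pderiv r)" by (rule Suc.IH)
  then show ?case by (simp add: funpow_Suc_right del: funpow.simps)
qed

lemma DV_mult: assumes P: "P \<in> DV h" and Q: "Q \<in> DV h" shows "wmult P Q \<in> DV h"
  unfolding wmult_def
proof (intro DV_sum DV_monom)
  fix j l t :: nat assume "t \<in> {..j}"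
  then have tj: "t \<le> j" by simp
  have dP: "h ^ j dvd coeff P j" and dQ: "h ^ l dvd coeff Q l" using P Q by (auto simp: DV_def)
  show "h ^ (j - t + l) dvd of_nat (j choose t) * coeff P j * (pderiv ^^ t) (coeff Q l)"
  proof (cases "t \<le> l")
    case True
    have "h ^ (l - t) dvd (pderiv ^^ t) (coeff Q l)"
      using dQ True by (intro higher_pderiv_dvd) simp
    then have "h ^ j * h ^ (l - t) dvd coeff P j * (pderiv ^^ t) (coeff Q l)"
      using dP by (rule mult_dvd_mono[rotated])
    moreover have "j - t + l = j + (l - t)" using True tj by simp
    ultimately show ?thesis by (simp add: power_add mult.assoc)
  next
    case False
    have "h ^ (j - t + l) dvd h ^ j" using False tj by (intro le_imp_power_dvd) simp
    then have "h ^ (j - t + l) dvd coeff P j" using dP by (rule dvd_trans)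
    then show ?thesis by (simp add: mult.assoc)
  qed
qed

lemma Ah_DV: "a \<in> Ah h \<Longrightarrow> a \<in> DV h"
proof (induction a rule: Ah.induct)
  case (scalar c)
  then show ?case by (simp add: polyw_def DV_monom)
next
  case genx
  then show ?case by (simp add: Xw_def DV_monom)
next
  case geny
  then show ?case by (simp add: yhat_eq DV_add DV_monom)
qed (simp_all add: DV_add DV_mult)

fun ypow :: "'a::field poly \<Rightarrow> nat \<Rightarrow> 'a poly poly" where
  "ypow h 0 = polyw 1"
| "ypow h (Suc n) = opw (yhat h) (ypow h n)"

lemma ypow_in: "ypow h n \<in> Ah h"
  by (induction n) (simp_all add: polyw_in mult_in Ah.geny)

lemma coeff_yhat_mult: "coeff (opw (yhat h) Q) k =
   pderiv h * coeff Q k + h * (pderiv (coeff Q k) + (if k = 0 then 0 else coeff Q (k - 1)))"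
  by (simp add: yhat_eq opw_add_left opw_monom_left coeff_Dop)

lemma ypow_props: "h \<noteq> 0 \<Longrightarrow> degree (ypow h n) = n \<and> coeff (ypow h n) n = h ^ n"
proof (induction n)
  case 0
  then show ?case by (simp add: polyw_def)
next
  case (Suc n)
  have c: "coeff (ypow h (Suc n)) (Suc n) = h ^ Suc n"
    using Suc by (simp add: coeff_yhat_mult coeff_eq_0)
  have "degree (ypow h (Suc n)) \<le> Suc n"
    using Suc by (intro degree_le) (auto simp: coeff_yhat_mult coeff_eq_0)
  moreover have "Suc n \<le> degree (ypow h (Suc n))"
    using c Suc.prems by (intro le_degree) simp
  ultimately have "degree (ypow h (Suc n)) = Suc n" by (rule antisym)
  with c show ?case by blast
qed

lemma pderiv_x: "pderiv [:0,1:] = (1::'a::field poly)"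
  by (simp add: pderiv_pCons one_pCons)

lemma Dpow_x: "(Dop^^k) (monom [:0,1:] 0) = monom [:0,1:] k + monom (of_nat k) (k - 1)"
proof (induction k)
  case 0
  then show ?case by simp
next
  case (Suc k)
  have "(Dop^^Suc k) (monom [:0,1:] 0 :: 'a poly poly) = Dop (monom [:0,1:] k + monom (of_nat k) (k - 1))"
    using Suc.IH by simp
  also have "\<dots> = monom 1 k + monom [:0,1:] (Suc k) + monom (of_nat k) (Suc (k - 1))"
    by (simp only: Dop_add Dop_monom pderiv_x pderiv_of_nat monom_eq_0 add_0_right add_0_left)
  also have "\<dots> = monom [:0,1:] (Suc k) + monom (of_nat (Suc k)) (Suc k - 1)"
    by (cases k) (simp_all add: add_monom algebra_simps)
  finally show ?case .
qed

lemma wc_x_monom: "wc (monom c k) Xw = pderiv (monom c k)"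
  by (simp add: wc_def opw_monom_left Xw_def Dpow_x opw_polyw_left[unfolded polyw_def]
      smult_monom pderiv_monom smult_add_right algebra_simps)

lemma wc_x: "wc P Xw = pderiv P"
proof -
  have "wc P Xw = wc (\<Sum>k\<le>degree P. monom (coeff P k) k) Xw"
    by (simp only: poly_as_sum_of_monoms)
  also have "\<dots> = (\<Sum>k\<le>degree P. wc (monom (coeff P k) k) Xw)"
    by (simp add: wc_def opw_sum_left opw_sum_right sum_subtractf)
  also have "\<dots> = pderiv (\<Sum>k\<le>degree P. monom (coeff P k) k)"
    by (simp only: wc_x_monom pderiv_sum')
  finally show ?thesis by (simp only: poly_as_sum_of_monoms)
qed



lemma intg:
  fixes h :: "'a::field poly"
  assumes char: "CHAR('a) = 0" and h: "h \<noteq> 0"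
  shows "a \<in> Ah h \<Longrightarrow> \<exists>\<beta>\<in>Ah h. pderiv \<beta> = smult h a"
proof (induction "degree a" arbitrary: a rule: less_induct)
  case less
  show ?case
  proof (cases "a = 0")
    case True
    then show ?thesis using zero_in[of h] by (intro bexI[of _ 0]) auto
  next
    case False
    define n where "n = degree a"
    have "h ^ n dvd coeff a n" using Ah_DV[OF less.prems] by (simp add: DV_def)
    then obtain c where c: "coeff a n = h ^ n * c" by (auto elim: dvdE)
    have nz: "(of_nat (Suc n) :: 'a) \<noteq> 0"
    proof -
    have "(of_nat (Suc n)::'a) = 0 \<longleftrightarrow> CHAR('a) dvd Suc n" by (rule of_nat_eq_0_iff_char_dvd)
    then show ?thesis using char by auto
  qed
    define \<beta>0 where "\<beta>0 = smult (smult (inverse (of_nat (Suc n))) c) (ypow h (Suc n))"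
    have b0: "\<beta>0 \<in> Ah h" unfolding \<beta>0_def by (intro smult_in ypow_in)
    have "pderiv \<beta>0 \<in> HI h" using comm_x_HI[OF b0] by (simp add: wc_x)
    then obtain d where d: "d \<in> Ah h" "pderiv \<beta>0 = smult h d" unfolding HI_def by auto
    have yp: "degree (ypow h (Suc n)) = Suc n" "coeff (ypow h (Suc n)) (Suc n) = h ^ Suc n"
      using ypow_props[OF h, of "Suc n"] by blast+
    have cd: "coeff d k = 0" if "k > n" for k
    proof -
      have "h * coeff d k = coeff (pderiv \<beta>0) k" using d by simp
      also have "\<dots> = 0" unfolding \<beta>0_def coeff_pderiv using that yp
        by (simp add: coeff_eq_0)
      finally show ?thesis using h by simp
    qed
    have "h * coeff d n = coeff (pderiv \<beta>0) n" using d by simp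
    also have "\<dots> = of_nat (Suc n) * (smult (inverse (of_nat (Suc n))) c * h ^ Suc n)"
      unfolding \<beta>0_def coeff_pderiv using yp by simp
    also have "\<dots> = h * (h ^ n * c)"
      by (simp only: of_nat_mult_conv_smult mult_smult_left smult_smult right_inverse[OF nz])
         (simp add: ac_simps)
    finally have cdn: "coeff d n = coeff a n" using h c by simp
    define a' where "a' = a - d"
    have a'in: "a' \<in> Ah h" unfolding a'_def by (intro diff_in less.prems d)
    have a'c: "coeff a' k = 0" if "k \<ge> n" for k
    proof (cases "k = n")
      case True then show ?thesis by (simp add: a'_def cdn)
    next
      case False
      then have "k > n" using that by simp
      then show ?thesis using cd[of k] by (simp add: a'_def n_def coeff_eq_0)
    qed
    show ?thesis
    proof (cases "a' = 0")
      case True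
      then have "pderiv \<beta>0 = smult h a" using d by (simp add: a'_def)
      then show ?thesis using b0 by blast
    next
      case False
      have "degree a' < n"
      proof (rule ccontr)
        assume "\<not> degree a' < n"
        then have "coeff a' (degree a') = 0" using a'c by simp
        then show False using False by simp
      qed
      then obtain \<beta>1 where b1: "\<beta>1 \<in> Ah h" "pderiv \<beta>1 = smult h a'"
        using less.hyps[OF _ a'in] n_def by auto
      have "pderiv (\<beta>0 + \<beta>1) = smult h a"
        using d b1 by (simp add: pderiv_add a'_def smult_diff_right)
      then show ?thesis using Ah.add[OF b0 b1(1)] by blast
    qed
  qed
qed

definition IM :: "'a::field poly \<Rightarrow> 'a poly poly set" where
  "IM h = {D2 h \<alpha> \<beta> | \<alpha> \<beta>. \<alpha> \<in> Ah h \<and> \<beta> \<in> Ah h}"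

lemma Fmap_diff: "Fmap (a - b) h = Fmap a h - Fmap b h"
  by (simp add: Fmap_def wmult_eq opw_diff_left opw_diff_right smult_diff_right sum_subtractf)

lemma Fmap_0: "Fmap 0 h = 0"
  by (simp add: Fmap_def wmult_eq)

lemma D2_diff: "D2 h (a - b) (c - d) = D2 h a c - D2 h b d"
  by (simp add: D2_eq Fmap_diff wc_def opw_diff_left opw_diff_right)

lemma IM_diff: "u \<in> IM h \<Longrightarrow> v \<in> IM h \<Longrightarrow> u - v \<in> IM h"
proof -
  assume "u \<in> IM h" "v \<in> IM h"
  then obtain a b c d where "u = D2 h a c" "v = D2 h b d" "a \<in> Ah h" "b \<in> Ah h" "c \<in> Ah h" "d \<in> Ah h"
    unfolding IM_def by blast
  then have "u - v = D2 h (a - b) (c - d)" "a - b \<in> Ah h" "c - d \<in> Ah h"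
    by (simp_all add: D2_diff diff_in)
  then show ?thesis unfolding IM_def by blast
qed

lemma IM_0: "0 \<in> IM h"
proof -
  have "D2 h 0 0 = 0" by (simp add: D2_eq Fmap_0 wc_def)
  moreover have "D2 h 0 0 \<in> IM h" unfolding IM_def using zero_in[of h] by blast
  ultimately show ?thesis by simp
qed

lemma IM_add: "u \<in> IM h \<Longrightarrow> v \<in> IM h \<Longrightarrow> u + v \<in> IM h"
  using IM_diff[of u h "0 - v"] IM_diff[OF IM_0, of v h] by simp

lemma IM_h:
  fixes h :: "'a::field poly"
  assumes "CHAR('a) = 0" "h \<noteq> 0" "a \<in> Ah h"
  shows "smult h a \<in> IM h"
proof -
  obtain \<beta> where b: "\<beta> \<in> Ah h" "pderiv \<beta> = smult h a" using intg[OF assms] by blast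
  have "D2 h 0 \<beta> = smult h a" using b by (simp add: D2_eq Fmap_0 wc_x[symmetric] wc_def)
  moreover have "D2 h 0 \<beta> \<in> IM h" unfolding IM_def using b zero_in[of h] by blast
  ultimately show ?thesis by simp
qed

lemma IM_HI:
  fixes h :: "'a::field poly"
  assumes "CHAR('a) = 0" "h \<noteq> 0" "e \<in> HI h"
  shows "e \<in> IM h"
  using assms IM_h unfolding HI_def by blast

lemma IM_h':
  fixes h :: "'a::field poly"
  assumes "CHAR('a) = 0" "h \<noteq> 0" "b \<in> Ah h"
  shows "smult (pderiv h) b \<in> IM h"
proof -
  have m1: "D2 h b 0 \<in> IM h" unfolding IM_def using assms(3) zero_in by blast
  have m2: "wc (yhat h) b - (Fmap b h - smult (pderiv h) b) \<in> IM h"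
    using assms by (intro IM_HI HI_diff comm_yhat_HI Fmap_HI)
  have eq: "smult (pderiv h) b = (wc (yhat h) b - (Fmap b h - smult (pderiv h) b)) - D2 h b 0"
    by (simp add: D2_eq wc_def)
  show ?thesis by (subst eq) (rule IM_diff[OF m2 m1])
qed

theorem proposition3p3:
  fixes h :: "'a::field_gcd poly"
  assumes "h \<noteq> 0"
  shows "{D2 h \<alpha> \<beta> | \<alpha> \<beta>. \<alpha> \<in> Ah h \<and> \<beta> \<in> Ah h}
           \<subseteq> {wmult (polyw (gcd h (pderiv h))) a | a. a \<in> Ah h}
         \<and> (CHAR('a) = 0 \<longrightarrow>
            {D2 h \<alpha> \<beta> | \<alpha> \<beta>. \<alpha> \<in> Ah h \<and> \<beta> \<in> Ah h}
              = {wmult (polyw (gcd h (pderiv h))) a | a. a \<in> Ah h})"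
proof -
  have G: "{wmult (polyw (gcd h (pderiv h))) a | a. a \<in> Ah h} = GI h"
    by (simp add: GI_def wmult_eq opw_polyw_left)
  have I: "{D2 h \<alpha> \<beta> | \<alpha> \<beta>. \<alpha> \<in> Ah h \<and> \<beta> \<in> Ah h} = IM h"
    by (simp add: IM_def)
  have sub: "IM h \<subseteq> GI h" unfolding IM_def using part_a by blast
  have sup: "GI h \<subseteq> IM h" if ch: "CHAR('a) = 0"
  proof
    fix z assume "z \<in> GI h"
    then obtain a where a: "a \<in> Ah h" "z = smult (gcd h (pderiv h)) a" unfolding GI_def by auto
    define u where "u = fst (bezout_coefficients h (pderiv h))"
    define v where "v = snd (bezout_coefficients h (pderiv h))"
    have "u * h + v * pderiv h = gcd h (pderiv h)"
      unfolding u_def v_def by (rule bezout_coefficients_fst_snd)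
    then have "z = smult h (smult u a) + smult (pderiv h) (smult v a)"
      using a by (simp add: smult_add_left[symmetric] ac_simps)
    also have "\<dots> \<in> IM h"
      using ch assms a by (intro IM_add IM_h IM_h' smult_in)
    finally show "z \<in> IM h" .
  qed
  show ?thesis unfolding G I using sub sup by blast
qed

end
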